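(* Let $p$ be a prime, $r\geq 1$ and $d\geq 0$. Then $$\prod_{\lambda\in\mathrm{Par}(d)}\vartheta_{p^r}(\lambda)=p^{\,r\,l(d)},$$ i.e. $\sum_{\lambda\in\mathrm{Par}(d)}\log_p\vartheta_{p^r}(\lambda)=r\,l(d)$. (Equivalently, the product equals $\det X_{p^r,d}$.)
   Context: $\mathrm{Par}(d)$ is the set of partitions of $d$; for a partition $\lambda$, $m_n(\lambda)$ is the multiplicity of $n$ as a part and $l(\lambda)$ the number of parts; $l(d)=\sum_{\lambda\in\mathrm{Par}(d)}l(\lambda)$ is the total length function. $\nu_p$ is the $p$-adic valuation. For an integer $a\geq 0$ let $d_p(a)=\sum_{j\geq1}\lfloor a/p^j\rfloor$ (so $p^{d_p(a)}$ is the $p$-part of $a!$). Define $$\vartheta_{p^r}(\lambda)=\prod_{\substack{n\geq1\\ 0\leq\nu_p(n)<r}}p^{(r-\nu_p(n))m_n(\lambda)+d_p(m_n(\lambda))}.$$ Also $X_{p^r,d}=(\langle m_\lambda,h_\mu\rangle_{p^r})_{\lambda,\mu\in\mathrm{Par}(d)}$, where $\langle p_\lambda,p_\mu\rangle_{\ell}=\delta_{\lambda\mu}\ell^{l(\lambda)}z_\lambda$ on symmetric functions ($m,h,p$ the monomial, complete homogeneous and power-sum bases, $z_\lambda=\prod_r r^{m_r(\lambda)}m_r(\lambda)!$). *)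

theory Defs
  imports "HOL-Library.Multiset" "HOL-Computational_Algebra.Primes"
begin

text \<open>Partitions of d, represented as multisets of positive parts summing to d.
  The multiplicity m_n(lambda) is count lambda n and l(lambda) is size lambda.\<close>
definition Par :: "nat \<Rightarrow> nat multiset set" where
  "Par d = {M. (\<forall>x\<in>#M. 0 < x) \<and> sum_mset M = d}"

definition total_length :: "nat \<Rightarrow> nat" where
  "total_length d = (\<Sum>M\<in>Par d. size M)"

text \<open>d_p(a) = sum_{j>=1} floor(a/p^j); terms with j > a vanish (p >= 2).\<close>
definition dp :: "nat \<Rightarrow> nat \<Rightarrow> nat" where
  "dp p a = (\<Sum>j\<in>{1..a}. a div p ^ j)"

text \<open>theta_{p^r}(lambda); factors with m_n(lambda) = 0 equal 1, so the product
  is restricted to the (finite) set of parts of lambda.\<close>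
definition theta :: "nat \<Rightarrow> nat \<Rightarrow> nat multiset \<Rightarrow> nat" where
  "theta p r M = (\<Prod>n\<in>{n\<in>set_mset M. 1 \<le> n \<and> multiplicity p n < r}.
      p ^ ((r - multiplicity p n) * count M n + dp p (count M n)))"

end

theory Submission
  imports Defs
begin

lemma Par_subset: "Par d \<subseteq> mset ` {xs. set xs \<subseteq> {..d} \<and> length xs \<le> d}"
proof
  fix M assume M: "M \<in> Par d"
  have le: "x \<le> d" if h: "x \<in># M" for x
  proof -
    obtain N where "M = add_mset x N" using h by (blast dest: multi_member_split)
    thus ?thesis using M unfolding Par_def by auto
  qed
  have "size M \<le> sum_mset M"
  proof -
    have "size M = (\<Sum>x\<in>#M. 1)" by (rule size_eq_sum_mset)
    also have "\<dots> \<le> sum_mset M"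
      using sum_mset_mono[of M "\<lambda>x. 1" "\<lambda>x. x"] M unfolding Par_def
      by (simp add: Suc_le_eq)
    finally show ?thesis .
  qed
  hence "size M \<le> d" using M unfolding Par_def by simp
  moreover obtain xs where xs: "M = mset xs" using ex_mset[of M] by (blast intro: sym)
  ultimately have "set xs \<subseteq> {..d} \<and> length xs \<le> d" using le by auto
  thus "M \<in> mset ` {xs. set xs \<subseteq> {..d} \<and> length xs \<le> d}"
    using xs by blast
qed

lemma finite_Par: "finite (Par d)"
  by (rule finite_subset[OF Par_subset]) (intro finite_imageI finite_lists_length_le, simp)

lemma Par_count_mult_le:
  assumes "M \<in> Par d"
  shows "count M n * n \<le> d"
proof -
  have sub: "replicate_mset (count M n) n \<subseteq># M"
    by (simp flip: count_le_replicate_mset_subset_eq)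
  define R where "R = M - replicate_mset (count M n) n"
  have "M = replicate_mset (count M n) n + R"
    unfolding R_def using sub by (rule subset_mset.add_diff_inverse[symmetric])
  hence "sum_mset M = sum_mset (replicate_mset (count M n) n) + sum_mset R"
    by (metis sum_mset.union)
  hence "sum_mset M = count M n * n + sum_mset R" by simp
  thus ?thesis using assms unfolding Par_def by simp
qed

lemma Par_count_le:
  assumes "M \<in> Par d"
  shows "count M n \<le> d"
proof -
  have "0 \<notin># M" using assms unfolding Par_def by auto
  show ?thesis
  proof (cases "n = 0")
    case True thus ?thesis using \<open>0 \<notin># M\<close> by (simp add: not_in_iff)
  next
    case False
    have "count M n \<le> count M n * n" using False by simp
    thus ?thesis using Par_count_mult_le[OF assms, of n] by linarith
  qed
qed

lemma Par_count_big:
  assumes "M \<in> Par d" "d < n"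
  shows "count M n = 0"
proof (rule ccontr)
  assume "count M n \<noteq> 0"
  hence "n \<le> count M n * n" by simp
  thus False using Par_count_mult_le[OF assms(1), of n] assms(2) by linarith
qed

definition g :: "nat \<Rightarrow> nat \<Rightarrow> nat" where
  "g d t = (if t \<le> d then card (Par (d - t)) else 0)"

lemma card_ge:
  assumes N: "1 \<le> N"
  shows "card {M\<in>Par d. c \<le> count M N} = g d (c*N)"
proof (cases "c * N \<le> d")
  case True
  let ?R = "replicate_mset c N"
  let ?A = "{M\<in>Par d. c \<le> count M N}"
  have "bij_betw (\<lambda>M. M - ?R) ?A (Par (d - c*N))"
  proof (rule bij_betw_byWitness[where f' = "\<lambda>M. M + ?R"])
    show "\<forall>a\<in>?A. a - ?R + ?R = a"
      by (auto simp: count_le_replicate_mset_subset_eq subset_mset.diff_add)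
    show "\<forall>a\<in>Par (d - c*N). a + ?R - ?R = a" by simp
    show "(\<lambda>M. M - ?R) ` ?A \<subseteq> Par (d - c*N)"
    proof
      fix M' assume "M' \<in> (\<lambda>M. M - ?R) ` ?A"
      then obtain M where M: "M \<in> ?A" and M': "M' = M - ?R" by blast
      have sub: "?R \<subseteq># M" using M by (simp add: count_le_replicate_mset_subset_eq)
      have "sum_mset M' = sum_mset M - c * N"
        using sum_mset_diff[OF sub] M' by (simp add: mult.commute)
      moreover have "\<forall>x\<in>#M'. 0 < x" using M M' unfolding Par_def
        by (auto dest: in_diffD)
      ultimately show "M' \<in> Par (d - c*N)" using M unfolding Par_def by auto
    qed
    show "(\<lambda>M. M + ?R) ` Par (d - c*N) \<subseteq> ?A"
    proof
      fix M' assume "M' \<in> (\<lambda>M. M + ?R) ` Par (d - c*N)"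
      then obtain M where M: "M \<in> Par (d - c*N)" and M': "M' = M + ?R" by blast
      have "sum_mset M' = (d - c*N) + c * N" using M M' unfolding Par_def
        by (simp add: mult.commute)
      hence "sum_mset M' = d" using True by simp
      moreover have "\<forall>x\<in>#M'. 0 < x" using M M' N unfolding Par_def by auto
      moreover have "c \<le> count M' N" using M' by simp
      ultimately show "M' \<in> ?A" unfolding Par_def by auto
    qed
  qed
  hence "card ?A = card (Par (d - c*N))" by (rule bij_betw_same_card)
  thus ?thesis using True by (simp add: g_def)
next
  case False
  have E: "{M\<in>Par d. c \<le> count M N} = {}"
  proof (rule ccontr)
    assume "{M\<in>Par d. c \<le> count M N} \<noteq> {}"
    then obtain M where "M \<in> Par d" "c \<le> count M N" by blast
    hence "c * N \<le> d" using Par_count_mult_le[of M d N] mult_le_mono1 le_trans by blast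
    thus False using False by simp
  qed
  show ?thesis using False by (simp only: E g_def) simp
qed

lemma div_card:
  assumes "c \<le> d" "1 \<le> q"
  shows "c div q = card {k\<in>{1..d}. k*q \<le> c}"
proof -
  have "c div q \<le> c" by simp
  have X: "x \<le> d" if "x * q \<le> c" for x
  proof -
    have "x \<le> x * q" using assms(2) by simp
    thus ?thesis using that assms(1) by linarith
  qed
  hence "{k\<in>{1..d}. k*q \<le> c} = {1..c div q}"
    using assms X by (auto simp: less_eq_div_iff_mult_less_eq)
  thus ?thesis by simp
qed

lemma card_filter_sum: "finite A \<Longrightarrow> card {x\<in>A. P x} = (\<Sum>x\<in>A. if P x then 1 else 0)"
  by (simp add: sum.If_cases Int_def conj_commute)

lemma sum_div:
  assumes N: "1 \<le> N" and q: "1 \<le> q"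
  shows "(\<Sum>M\<in>Par d. count M N div q) = (\<Sum>k\<in>{1..d}. g d (k*q*N))"
proof -
  have "(\<Sum>M\<in>Par d. count M N div q) = (\<Sum>M\<in>Par d. \<Sum>k\<in>{1..d}. if k*q \<le> count M N then 1 else 0)"
    by (rule sum.cong[OF refl], subst div_card[OF Par_count_le q], assumption,
        rule card_filter_sum, simp)
  also have "\<dots> = (\<Sum>k\<in>{1..d}. \<Sum>M\<in>Par d. if k*q \<le> count M N then 1 else 0)"
    by (rule sum.swap)
  also have "\<dots> = (\<Sum>k\<in>{1..d}. card {M\<in>Par d. k*q \<le> count M N})"
    by (simp add: card_filter_sum finite_Par)
  also have "\<dots> = (\<Sum>k\<in>{1..d}. g d (k*q*N))"
    by (rule sum.cong[OF refl]) (simp add: card_ge[OF N])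
  finally show ?thesis .
qed

definition F :: "nat \<Rightarrow> nat \<Rightarrow> nat" where
  "F d N = (\<Sum>M\<in>Par d. count M N)"

lemma sum_div_F:
  assumes N: "1 \<le> N" and q: "1 \<le> q"
  shows "(\<Sum>M\<in>Par d. count M N div q) = F d (q*N)"
proof -
  have "F d (q*N) = (\<Sum>M\<in>Par d. count M (q*N) div 1)" by (simp add: F_def)
  also have "\<dots> = (\<Sum>k\<in>{1..d}. g d (k*1*(q*N)))"
    by (rule sum_div) (use N q in auto)
  finally show ?thesis using sum_div[OF N q] by (simp add: mult.assoc)
qed

lemma F_big: "d < N \<Longrightarrow> F d N = 0"
  by (simp add: F_def Par_count_big)

lemma mult_pow:
  assumes "prime (p::nat)" "n \<noteq> 0"
  shows "multiplicity p (p^j * n) = j + multiplicity p n"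
  using assms by (simp add: prime_elem_multiplicity_mult_distrib prime_imp_prime_elem prime_gt_0_nat)

lemma mult_le_self:
  assumes "prime (p::nat)" "N \<noteq> 0"
  shows "multiplicity p N \<le> N"
proof -
  let ?v = "multiplicity p N"
  have "p ^ ?v \<le> N" using multiplicity_dvd[of p N] assms(2) by (simp add: dvd_imp_le)
  moreover have "2 ^ ?v \<le> p ^ ?v" using prime_ge_2_nat[OF assms(1)] by (simp add: power_mono)
  moreover have "?v < 2 ^ ?v" by simp
  ultimately show ?thesis by linarith
qed

lemma card_J: "1 \<le> (r::nat) \<Longrightarrow> card {j. 1 \<le> j \<and> j \<le> v \<and> v < r + j} = min v r"
proof -
  assume r: "1 \<le> r"
  have "{j. 1 \<le> j \<and> j \<le> v \<and> v < r + j} = {v + 1 - min v r..v}"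
    using r by auto
  thus ?thesis by simp
qed

lemma fiber_card:
  assumes p: "prime p" and r: "1 \<le> r" and N: "1 \<le> N" "N \<le> d"
  shows "card {x\<in>{x\<in>{n\<in>{1..d}. multiplicity p n < r} \<times> {1..d}. p ^ snd x * fst x \<le> d}.
           p ^ snd x * fst x = N} = min (multiplicity p N) r"
proof -
  let ?J = "{j. 1 \<le> j \<and> j \<le> multiplicity p N \<and> multiplicity p N < r + j}"
  let ?S = "{x\<in>{x\<in>{n\<in>{1..d}. multiplicity p n < r} \<times> {1..d}. p ^ snd x * fst x \<le> d}.
           p ^ snd x * fst x = N}"
  have p0: "p \<noteq> 0" using p by auto
  have "?S = (\<lambda>j. (N div p^j, j)) ` ?J"
  proof
    show "?S \<subseteq> (\<lambda>j. (N div p^j, j)) ` ?J"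
    proof
      fix x assume x: "x \<in> ?S"
      obtain n j where xe: "x = (n, j)" by (cases x)
      have n: "1 \<le> n" "multiplicity p n < r" "1 \<le> j" and e: "p^j * n = N"
        using x xe by auto
      have m: "multiplicity p N = j + multiplicity p n" using mult_pow[OF p, of n j] n e by simp
      have "n = N div p^j" using e p0 by auto
      thus "x \<in> (\<lambda>j. (N div p^j, j)) ` ?J" using xe m n by auto
    qed
    show "(\<lambda>j. (N div p^j, j)) ` ?J \<subseteq> ?S"
    proof
      fix x assume "x \<in> (\<lambda>j. (N div p^j, j)) ` ?J"
      then obtain j where j: "j \<in> ?J" and xe: "x = (N div p^j, j)" by blast
      have "p^j dvd N" using j N p by (intro multiplicity_dvd') auto
      then obtain n where e: "N = p^j * n" by blast
      have n0: "n \<noteq> 0" using e N by auto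
      have nd: "N div p^j = n" using e p0 by auto
      have m: "multiplicity p N = j + multiplicity p n" using mult_pow[OF p n0, of j] e by simp
      have "n \<le> N" using e p0 by simp
      moreover have "j \<le> d" using j mult_le_self[OF p, of N] N by auto
      moreover have "n \<le> d" using \<open>n \<le> N\<close> N by linarith
      ultimately show "x \<in> ?S" using xe nd j m n0 e N by auto
    qed
  qed
  moreover have "inj_on (\<lambda>j. (N div p^j, j)) ?J" by (auto intro: inj_onI)
  ultimately have "card ?S = card ?J" by (simp add: card_image)
  thus ?thesis using card_J[OF r] by simp
qed

lemma reindex:
  assumes p: "prime p" and r: "1 \<le> r" and G0: "\<And>N. d < N \<Longrightarrow> G N = (0::nat)"
  shows "(\<Sum>n\<in>{n\<in>{1..d}. multiplicity p n < r}. \<Sum>j\<in>{1..d}. G (p^j*n))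
       = (\<Sum>N\<in>{1..d}. min (multiplicity p N) r * G N)"
proof -
  let ?T = "{n\<in>{1..d}. multiplicity p n < r}"
  let ?h = "\<lambda>x. p ^ snd x * fst x"
  let ?A = "{x\<in>?T \<times> {1..d}. ?h x \<le> d}"
  have fT: "finite (?T \<times> {1..d})" by auto
  have fA: "finite ?A" by auto
  have "(\<Sum>n\<in>?T. \<Sum>j\<in>{1..d}. G (p^j*n)) = (\<Sum>x\<in>?T \<times> {1..d}. G (?h x))"
    by (simp add: sum.cartesian_product case_prod_beta)
  also have "\<dots> = (\<Sum>x\<in>?A. G (?h x))"
  proof (rule sum.mono_neutral_right[OF fT])
    show "?A \<subseteq> ?T \<times> {1..d}" by blast
    show "\<forall>x\<in>?T \<times> {1..d} - ?A. G (?h x) = 0"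
    proof
      fix x assume "x \<in> ?T \<times> {1..d} - ?A"
      hence "d < ?h x" by auto
      thus "G (?h x) = 0" by (rule G0)
    qed
  qed
  also have "\<dots> = (\<Sum>N\<in>{1..d}. \<Sum>x\<in>{x\<in>?A. ?h x = N}. G (?h x))"
  proof (rule sum.group[symmetric, OF fA])
    show "finite {1..d}" by simp
    show "?h ` ?A \<subseteq> {1..d}"
    proof
      fix y assume "y \<in> ?h ` ?A"
      then obtain n j where "n \<ge> 1" "p^j*n \<le> d" "y = p^j*n" by auto
      moreover have "p^j \<ge> 1" using p prime_gt_0_nat by (simp add: Suc_le_eq)
      ultimately show "y \<in> {1..d}" by (simp add: Suc_le_eq)
    qed
  qed
  also have "\<dots> = (\<Sum>N\<in>{1..d}. card {x\<in>?A. ?h x = N} * G N)"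
    by (rule sum.cong[OF refl]) simp
  also have "\<dots> = (\<Sum>N\<in>{1..d}. min (multiplicity p N) r * G N)"
  proof (rule sum.cong[OF refl])
    fix N assume "N \<in> {1..d}"
    hence "1 \<le> N" "N \<le> d" by auto
    thus "card {x\<in>?A. ?h x = N} * G N = min (multiplicity p N) r * G N"
      using fiber_card[OF p r] by presburger
  qed
  finally show ?thesis .
qed

lemma dp_sum:
  assumes p: "prime p" and c: "c \<le> d"
  shows "dp p c = (\<Sum>j\<in>{1..d}. c div p^j)"
  unfolding dp_def
proof (rule sum.mono_neutral_left)
  show "finite {1..d}" by simp
  show "{1..c} \<subseteq> {1..d}" using c by auto
  show "\<forall>i\<in>{1..d} - {1..c}. c div p ^ i = 0"
  proof
    fix i assume "i \<in> {1..d} - {1..c}"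
    hence "c < i" by auto
    moreover have "i < 2^i" by simp
    moreover have "2^i \<le> p^i" using prime_ge_2_nat[OF p] by (simp add: power_mono)
    ultimately have "c < p ^ i" by linarith
    thus "c div p ^ i = 0" by simp
  qed
qed

lemma E_eq:
  assumes p: "prime p" and M: "M \<in> Par d"
  shows "(\<Sum>n\<in>{n\<in>set_mset M. 1 \<le> n \<and> multiplicity p n < r}.
      (r - multiplicity p n) * count M n + dp p (count M n))
    = (\<Sum>n\<in>{n\<in>{1..d}. multiplicity p n < r}.
      (r - multiplicity p n) * count M n + (\<Sum>j\<in>{1..d}. count M n div p^j))"
proof -
  have "(\<Sum>n\<in>{n\<in>set_mset M. 1 \<le> n \<and> multiplicity p n < r}.
      (r - multiplicity p n) * count M n + dp p (count M n))
    = (\<Sum>n\<in>{n\<in>{1..d}. multiplicity p n < r}.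
      (r - multiplicity p n) * count M n + dp p (count M n))"
  proof (rule sum.mono_neutral_left)
    show "finite {n\<in>{1..d}. multiplicity p n < r}" by simp
    show "{n\<in>set_mset M. 1 \<le> n \<and> multiplicity p n < r} \<subseteq> {n\<in>{1..d}. multiplicity p n < r}"
    proof
      fix n assume n: "n \<in> {n\<in>set_mset M. 1 \<le> n \<and> multiplicity p n < r}"
      have "n \<le> d"
      proof (rule ccontr)
        assume "\<not> n \<le> d"
        hence "count M n = 0" using Par_count_big[OF M] by simp
        thus False using n by (simp add: count_eq_zero_iff)
      qed
      thus "n \<in> {n\<in>{1..d}. multiplicity p n < r}" using n by simp
    qed
    show "\<forall>i\<in>{n\<in>{1..d}. multiplicity p n < r} - {n\<in>set_mset M. 1 \<le> n \<and> multiplicity p n < r}.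
        (r - multiplicity p i) * count M i + dp p (count M i) = 0"
    proof
      fix i assume "i \<in> {n\<in>{1..d}. multiplicity p n < r} - {n\<in>set_mset M. 1 \<le> n \<and> multiplicity p n < r}"
      hence "count M i = 0" by (auto simp: not_in_iff)
      thus "(r - multiplicity p i) * count M i + dp p (count M i) = 0" by (simp add: dp_def)
    qed
  qed
  also have "\<dots> = (\<Sum>n\<in>{n\<in>{1..d}. multiplicity p n < r}.
      (r - multiplicity p n) * count M n + (\<Sum>j\<in>{1..d}. count M n div p^j))"
    by (rule sum.cong[OF refl]) (simp add: dp_sum[OF p Par_count_le[OF M]])
  finally show ?thesis .
qed

lemma size_eq:
  assumes M: "M \<in> Par d"
  shows "size M = (\<Sum>n\<in>{1..d}. count M n)"
  unfolding size_multiset_overloaded_eq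
proof (rule sum.mono_neutral_left)
  show "finite {1..d}" by simp
  show "set_mset M \<subseteq> {1..d}"
  proof
    fix n assume n: "n \<in># M"
    hence "count M n \<noteq> 0" by simp
    have "n \<le> d"
    proof (rule ccontr)
      assume "\<not> n \<le> d"
      hence "count M n = 0" using Par_count_big[OF M] by simp
      thus False using n by (simp add: count_eq_zero_iff)
    qed
    moreover have "0 < n" using M n unfolding Par_def by auto
    ultimately show "n \<in> {1..d}" by auto
  qed
  show "\<forall>i\<in>{1..d} - set_mset M. count M i = 0" by (auto simp: not_in_iff)
qed

theorem proposition4p1:
  fixes p r d :: nat
  assumes "prime p" and "1 \<le> r"
  shows "(\<Prod>M\<in>Par d. theta p r M) = p ^ (r * total_length d)"
proof -
  note p = assms(1) and r = assms(2)
  let ?v = "multiplicity p"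
  let ?T = "{n\<in>{1..d}. ?v n < r}"
  define E where "E M = (\<Sum>n\<in>{n\<in>set_mset M. 1 \<le> n \<and> ?v n < r}.
      (r - ?v n) * count M n + dp p (count M n))" for M
  have th: "theta p r M = p ^ E M" for M
    unfolding theta_def E_def by (simp add: power_sum)
  have "(\<Sum>M\<in>Par d. E M) = (\<Sum>M\<in>Par d. \<Sum>n\<in>?T.
      (r - ?v n) * count M n + (\<Sum>j\<in>{1..d}. count M n div p^j))"
    by (rule sum.cong[OF refl]) (simp only: E_def E_eq[OF p])
  also have "\<dots> = (\<Sum>n\<in>?T. \<Sum>M\<in>Par d.
      (r - ?v n) * count M n + (\<Sum>j\<in>{1..d}. count M n div p^j))"
    by (rule sum.swap)
  also have "\<dots> = (\<Sum>n\<in>?T. (r - ?v n) * F d n + (\<Sum>j\<in>{1..d}. F d (p^j * n)))"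
  proof (rule sum.cong[OF refl])
    fix n assume n: "n \<in> ?T"
    have "(\<Sum>M\<in>Par d. \<Sum>j\<in>{1..d}. count M n div p^j) = (\<Sum>j\<in>{1..d}. \<Sum>M\<in>Par d. count M n div p^j)"
      by (rule sum.swap)
    also have "\<dots> = (\<Sum>j\<in>{1..d}. F d (p^j * n))"
    proof (rule sum.cong[OF refl])
      fix j
      have "1 \<le> p^j" using p prime_gt_0_nat by (simp add: Suc_le_eq)
      thus "(\<Sum>M\<in>Par d. count M n div p^j) = F d (p^j * n)"
        using n by (intro sum_div_F) auto
    qed
    finally show "(\<Sum>M\<in>Par d. (r - ?v n) * count M n + (\<Sum>j\<in>{1..d}. count M n div p^j))
        = (r - ?v n) * F d n + (\<Sum>j\<in>{1..d}. F d (p^j * n))"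
      by (simp add: sum.distrib F_def sum_distrib_left)
  qed
  also have "\<dots> = (\<Sum>n\<in>?T. (r - ?v n) * F d n) + (\<Sum>N\<in>{1..d}. min (?v N) r * F d N)"
  proof -
    have "(\<Sum>n\<in>?T. \<Sum>j\<in>{1..d}. F d (p^j * n)) = (\<Sum>N\<in>{1..d}. min (?v N) r * F d N)"
      by (rule reindex[OF p r F_big])
    thus ?thesis by (simp only: sum.distrib)
  qed
  also have "(\<Sum>n\<in>?T. (r - ?v n) * F d n) = (\<Sum>n\<in>{1..d}. (if ?v n < r then r - ?v n else 0) * F d n)"
  proof -
    have "(\<Sum>n\<in>?T. (r - ?v n) * F d n) = (\<Sum>n\<in>{1..d}. if ?v n < r then (r - ?v n) * F d n else 0)"
      by (rule sum.inter_filter) simp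
    also have "\<dots> = (\<Sum>n\<in>{1..d}. (if ?v n < r then r - ?v n else 0) * F d n)"
      by (rule sum.cong) auto
    finally show ?thesis .
  qed
  also have "\<dots> + (\<Sum>N\<in>{1..d}. min (?v N) r * F d N) = (\<Sum>N\<in>{1..d}. r * F d N)"
  proof -
    have "\<And>x. (if ?v x < r then r - ?v x else 0) + min (?v x) r = r" by auto
    thus ?thesis by (simp add: sum.distrib[symmetric] add_mult_distrib[symmetric])
  qed
  also have "\<dots> = r * total_length d"
    unfolding total_length_def F_def
    by (simp add: sum_distrib_left size_eq cong: sum.cong) (rule sum.swap)
  finally have "(\<Sum>M\<in>Par d. E M) = r * total_length d" .
  hence "p ^ (r * total_length d) = (\<Prod>M\<in>Par d. p ^ E M)" by (simp add: power_sum[symmetric])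
  thus ?thesis by (simp add: th)
qed

end
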